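(* Let $\Omega\subseteq\mathbb{R}^N$ be an open set with $\mathcal{L}^N(\Omega)<+\infty$, and let $p:\Omega\to[1,+\infty)$ be a measurable function with $p^+<+\infty$. Assume there exists $\beta>1$ such that $p^+\le \beta p^-$. Then for every $1\le q\le p^-$ and every $u\in L^{p(\cdot)}(\Omega)$, $$\|u\|_{q}\le \max\Big\{\big(\mathcal{L}^N(\Omega)\big)^{\frac1q-\frac1{p^-}},\ \big(\mathcal{L}^N(\Omega)\big)^{\beta\left(\frac1q-\frac1{p^+}\right)}\Big\}\Big[1+\frac{q}{p^+}(\beta-1)\Big]^{1/q}\|u\|_{p(\cdot)}.$$ In particular, if $u\in L^{p(\cdot)}(\Omega,\mathbb{R}^d)$, then $u\in L^q(\Omega,\mathbb{R}^d)$ for every $1\le q\le p^-$.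
   Context: For a measurable $p:\Omega\to[1,+\infty)$, $p^-:=\operatorname{ess\,inf}_{\Omega}p$ and $p^+:=\operatorname{ess\,sup}_{\Omega}p$. When $p^+<\infty$, $L^{p(\cdot)}(\Omega)$ is the space of measurable $u:\Omega\to\mathbb{R}$ with $\int_\Omega|u(x)|^{p(x)}dx<\infty$, endowed with the Luxemburg norm $\|u\|_{p(\cdot)}:=\inf\{\lambda>0:\int_\Omega|u(x)/\lambda|^{p(x)}dx\le1\}$; $L^{p(\cdot)}(\Omega,\mathbb{R}^d)$ is the set of $u:\Omega\to\mathbb{R}^d$ with $|u|\in L^{p(\cdot)}(\Omega)$, and $\|u\|_{p(\cdot)}:=\||u|\|_{p(\cdot)}$. $\|\cdot\|_q$ is the usual $L^q$ norm. *)

theory Defs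
  imports "HOL-Analysis.Analysis" "HOL-Probability.Essential_Supremum"
begin

definition essinf :: "'a measure \<Rightarrow> ('a \<Rightarrow> ereal) \<Rightarrow> ereal" where
  "essinf M f = - esssup M (\<lambda>x. - f x)"

definition p_plus :: "'a::euclidean_space set \<Rightarrow> ('a \<Rightarrow> real) \<Rightarrow> ereal" where
  "p_plus \<Omega> p = esssup (lebesgue_on \<Omega>) (\<lambda>x. ereal (p x))"

definition p_minus :: "'a::euclidean_space set \<Rightarrow> ('a \<Rightarrow> real) \<Rightarrow> ereal" where
  "p_minus \<Omega> p = essinf (lebesgue_on \<Omega>) (\<lambda>x. ereal (p x))"

definition modular :: "'a::euclidean_space set \<Rightarrow> ('a \<Rightarrow> real) \<Rightarrow> ('a \<Rightarrow> real) \<Rightarrow> ennreal" where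
  "modular \<Omega> p f = (\<integral>\<^sup>+ x. ennreal (\<bar>f x\<bar> powr p x) \<partial>lebesgue_on \<Omega>)"

definition in_Lvar :: "'a::euclidean_space set \<Rightarrow> ('a \<Rightarrow> real) \<Rightarrow> ('a \<Rightarrow> real) \<Rightarrow> bool" where
  "in_Lvar \<Omega> p f \<longleftrightarrow> f \<in> borel_measurable (lebesgue_on \<Omega>) \<and> modular \<Omega> p f < \<infinity>"

definition lux_norm :: "'a::euclidean_space set \<Rightarrow> ('a \<Rightarrow> real) \<Rightarrow> ('a \<Rightarrow> real) \<Rightarrow> real" where
  "lux_norm \<Omega> p f = Inf {t::real. t > 0 \<and> modular \<Omega> p (\<lambda>x. f x / t) \<le> 1}"

definition in_Lq :: "'a::euclidean_space set \<Rightarrow> real \<Rightarrow> ('a \<Rightarrow> real) \<Rightarrow> bool" where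
  "in_Lq \<Omega> q f \<longleftrightarrow> in_Lvar \<Omega> (\<lambda>_. q) f"

definition Lq_norm :: "'a::euclidean_space set \<Rightarrow> real \<Rightarrow> ('a \<Rightarrow> real) \<Rightarrow> real" where
  "Lq_norm \<Omega> q f = (enn2real (modular \<Omega> (\<lambda>_. q) f)) powr (1 / q)"

end

theory Submission imports Defs begin

lemma young1:
  fixes x r :: real assumes "0 \<le> x" "1 \<le> r"
  shows "x \<le> x powr r / r + (1 - 1/r)"
proof (cases "x = 0")
  case True then show ?thesis using assms by (simp add: field_simps)
next
  case False
  then have xp: "x > 0" using assms by simp
  have "(x powr r) powr (1/r) * 1 powr (1 - 1/r) \<le> (1/r) * x powr r + (1 - 1/r) * 1"
    by (rule Youngs_inequality_0) (use assms xp in \<open>auto simp: field_simps\<close>)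
  moreover have "(x powr r) powr (1/r) = x" using assms xp by (simp add: powr_powr)
  ultimately show ?thesis by simp
qed

lemma young2:
  fixes w r M0 :: real assumes "0 \<le> w" "1 \<le> r" "M0 > 0"
  shows "w \<le> M0 powr (r - 1) * (w powr r) / r + (1 - 1/r) / M0"
proof -
  have "M0 * w \<le> (M0 * w) powr r / r + (1 - 1/r)"
    using young1[of "M0*w" r] assms by simp
  also have "(M0 * w) powr r = M0 * (M0 powr (r - 1) * w powr r)"
    using assms by (simp add: powr_mult powr_diff)
  also have "M0 * (M0 powr (r - 1) * w powr r) / r + (1 - 1/r) = M0 * (M0 powr (r - 1) * w powr r / r + (1 - 1/r) / M0)"
    using assms by (simp add: field_simps)
  finally show ?thesis using assms by (simp add: mult_le_cancel_left_pos)
qed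

lemma pointwise:
  fixes m q Pm Pp px vx :: real
  assumes m: "m > 0" and q: "1 \<le> q" "q \<le> Pm" and PP: "Pm \<le> Pp"
    and px: "Pm \<le> px" "px \<le> Pp"
  defines "mm \<equiv> (if m \<ge> 1 then Pp else Pm)"
  shows "\<bar>vx\<bar> powr q \<le> (m powr (1 - q/mm) * (q/Pm)) * (\<bar>vx\<bar> powr px)
           + (1 - q/Pp) / (m powr (q/mm))"
proof -
  define M0 where "M0 = m powr (q/mm)"
  define r where "r = px / q"
  have Pm0: "Pm > 0" using q by simp
  have mm: "Pm \<le> mm" "mm \<le> Pp" "mm > 0" using PP Pm0 by (auto simp: mm_def)
  have r1: "1 \<le> r" using q px by (simp add: r_def)
  have M0: "M0 > 0" using m by (simp add: M0_def)
  have "\<bar>vx\<bar> powr q \<le> M0 powr (r - 1) * ((\<bar>vx\<bar> powr q) powr r) / r + (1 - 1/r) / M0"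
    by (rule young2) (use r1 M0 in auto)
  also have "(\<bar>vx\<bar> powr q) powr r = \<bar>vx\<bar> powr px"
    using q by (simp add: powr_powr r_def)
  also have "M0 powr (r - 1) = m powr ((px - q)/mm)"
  proof -
    have "q/mm * (px/q - 1) = (px - q)/mm" using q mm by (simp add: field_simps)
    then show ?thesis using m unfolding M0_def r_def by (simp only: powr_powr)
  qed
  also have "m powr ((px - q)/mm) \<le> m powr (1 - q/mm)"
  proof (cases "m \<ge> 1")
    case True
    then have "(px - q)/mm \<le> 1 - q/mm" using mm px True by (simp add: mm_def field_simps)
    then show ?thesis using True by (intro powr_mono) auto
  next
    case False
    then have "(px - q)/mm \<ge> 1 - q/mm" using mm px False by (simp add: mm_def field_simps)
    then show ?thesis using False m by (intro powr_mono') auto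
  qed
  hence "m powr ((px - q)/mm) * \<bar>vx\<bar> powr px / r \<le> (m powr (1 - q/mm) * (q/Pm)) * (\<bar>vx\<bar> powr px)"
  proof -
    assume a: "m powr ((px - q)/mm) \<le> m powr (1 - q/mm)"
    have "1/r \<le> q/Pm" using q px by (simp add: r_def field_simps)
    have "m powr ((px - q)/mm) * \<bar>vx\<bar> powr px / r = m powr ((px - q)/mm) * (1/r) * \<bar>vx\<bar> powr px" by simp
    also have "\<dots> \<le> m powr (1 - q/mm) * (q/Pm) * \<bar>vx\<bar> powr px"
      using a \<open>1/r \<le> q/Pm\<close> r1 by (intro mult_right_mono mult_mono) auto
    finally show ?thesis .
  qed
  moreover have "(1 - 1/r) / M0 \<le> (1 - q/Pp) / (m powr (q/mm))"
  proof -
    have "1 - 1/r \<le> 1 - q/Pp" using q px Pm0 by (simp add: r_def field_simps)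
    then show ?thesis using M0 by (simp add: M0_def divide_right_mono)
  qed
  ultimately show ?thesis by linarith
qed

lemma real_bound:
  fixes m q Pm Pp \<beta> :: real
  assumes m: "m > 0" and q: "1 \<le> q" "q \<le> Pm" and PP: "Pm \<le> Pp" "Pp \<le> \<beta> * Pm" and b: "1 \<le> \<beta>"
  defines "mm \<equiv> (if m \<ge> 1 then Pp else Pm)"
  shows "m powr (1 - q/mm) * (q/Pm) + (1 - q/Pp) / (m powr (q/mm)) * m
     \<le> (max (m powr (1/q - 1/Pm)) (m powr (\<beta> * (1/q - 1/Pp))) * (1 + q/Pp*(\<beta>-1)) powr (1/q)) powr q"
proof -
  have Pm0: "Pm > 0" using q by simp
  have mm: "Pm \<le> mm" "mm \<le> Pp" "mm > 0" using PP Pm0 by (auto simp: mm_def)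
  have "m / m powr (q/mm) = m powr (1 - q/mm)" using m by (simp add: powr_diff)
  then have eq: "m powr (1 - q/mm) * (q/Pm) + (1 - q/Pp) / (m powr (q/mm)) * m
      = m powr (1 - q/mm) * (q/Pm + 1 - q/Pp)"
  proof -
    have "(1 - q/Pp) / (m powr (q/mm)) * m = (1 - q/Pp) * (m / m powr (q/mm))" by simp
    then show ?thesis unfolding \<open>m / m powr (q/mm) = m powr (1 - q/mm)\<close> by (simp add: algebra_simps)
  qed
  have F: "q/Pm + 1 - q/Pp \<le> 1 + q/Pp*(\<beta>-1)"
  proof -
    have "q/Pm \<le> q*\<beta>/Pp" using PP Pm0 q by (simp add: field_simps mult_left_mono)
    moreover have "q/Pp*(\<beta>-1) = q*\<beta>/Pp - q/Pp" by (simp add: diff_divide_distrib right_diff_distrib)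
    ultimately show ?thesis by linarith
  qed
  have Fpos: "0 \<le> q/Pm + 1 - q/Pp"
  proof -
    have "q/Pp \<le> 1" using q PP Pm0 by simp
    moreover have "q/Pm \<ge> 0" using q Pm0 by simp
    ultimately show ?thesis by linarith
  qed
  define a where "a = m powr (1/q - 1/Pm)"
  define b where "b = m powr (\<beta> * (1/q - 1/Pp))"
  have e1: "(1/q - 1/Pm) * q = 1 - q/Pm" using q by (simp add: field_simps)
  have e2: "\<beta> * (1/q - 1/Pp) * q = \<beta> * (1 - q/Pp)" using q by (simp add: field_simps)
  have apq: "a powr q = m powr (1 - q/Pm)" unfolding a_def by (simp only: powr_powr e1)
  have bpq: "b powr q = m powr (\<beta> * (1 - q/Pp))" unfolding b_def by (simp only: powr_powr e2)
  have maxq: "(max a b) powr q = max (a powr q) (b powr q)"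
  proof (cases "a \<le> b")
    case True
    then have "a powr q \<le> b powr q" using q by (intro powr_mono2) (auto simp: a_def)
    then show ?thesis using True by (simp add: max_def)
  next
    case False
    then have "b powr q \<le> a powr q" using q by (intro powr_mono2) (auto simp: b_def)
    then show ?thesis using False by (simp add: max_def)
  qed
  have mle: "m powr (1 - q/mm) \<le> max (m powr (1 - q/Pm)) (m powr (\<beta> * (1 - q/Pp)))"
  proof (cases "m \<ge> 1")
    case True
    have "q/Pp \<le> 1" using q PP Pm0 by simp
    then have "0 \<le> (\<beta>-1)*(1-q/Pp)" using b by (intro mult_nonneg_nonneg) auto
    then have "1 - q/Pp \<le> \<beta> * (1 - q/Pp)" by (simp add: algebra_simps del: times_divide_eq_right)
    then have "m powr (1 - q/Pp) \<le> m powr (\<beta> * (1 - q/Pp))" using True by (intro powr_mono) auto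
    then show ?thesis using True by (simp add: mm_def)
  next
    case False then show ?thesis by (simp add: mm_def)
  qed
  have "(max a b * (1 + q/Pp*(\<beta>-1)) powr (1/q)) powr q = max (a powr q) (b powr q) * (1 + q/Pp*(\<beta>-1))"
  proof -
    have "1 + q/Pp*(\<beta>-1) \<ge> 0" using b q PP Pm0 by simp
    then have "((1 + q/Pp*(\<beta>-1)) powr (1/q)) powr q = 1 + q/Pp*(\<beta>-1)" using q by (simp add: powr_powr)
    moreover have "(max a b * (1 + q/Pp*(\<beta>-1)) powr (1/q)) powr q = (max a b) powr q * ((1 + q/Pp*(\<beta>-1)) powr (1/q)) powr q"
      by (rule powr_mult)
    ultimately show ?thesis using maxq by simp
  qed
  also have "\<dots> \<ge> m powr (1 - q/mm) * (q/Pm + 1 - q/Pp)"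
    unfolding apq bpq using mle F Fpos by (intro mult_mono) (auto simp: le_max_iff_disj)
  finally show ?thesis unfolding eq a_def b_def .
qed

lemma core:
  fixes M :: "'a measure" and p v :: "'a \<Rightarrow> real" and m q Pm Pp \<beta> :: real
  assumes sp: "emeasure M (space M) = ennreal m" and m: "m > 0"
    and meas: "(\<lambda>x. ennreal (\<bar>v x\<bar> powr p x)) \<in> borel_measurable M"
    and ae: "AE x in M. Pm \<le> p x \<and> p x \<le> Pp"
    and q: "1 \<le> q" "q \<le> Pm" and PP: "Pm \<le> Pp" "Pp \<le> \<beta> * Pm" and b: "1 \<le> \<beta>"
    and int1: "(\<integral>\<^sup>+ x. ennreal (\<bar>v x\<bar> powr p x) \<partial>M) \<le> 1"
  shows "(\<integral>\<^sup>+ x. ennreal (\<bar>v x\<bar> powr q) \<partial>M)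
     \<le> ennreal ((max (m powr (1/q - 1/Pm)) (m powr (\<beta> * (1/q - 1/Pp))) * (1 + q/Pp*(\<beta>-1)) powr (1/q)) powr q)"
proof -
  define mm where "mm = (if m \<ge> 1 then Pp else Pm)"
  define A where "A = m powr (1 - q/mm) * (q/Pm)"
  define B where "B = (1 - q/Pp) / (m powr (q/mm))"
  have Pm0: "Pm > 0" using q by simp
  have A0: "A \<ge> 0" using Pm0 q unfolding A_def by (intro mult_nonneg_nonneg) auto
  have B0: "B \<ge> 0" using q PP Pm0 by (simp add: B_def)
  have "(\<integral>\<^sup>+ x. ennreal (\<bar>v x\<bar> powr q) \<partial>M) \<le> (\<integral>\<^sup>+ x. ennreal A * ennreal (\<bar>v x\<bar> powr p x) + ennreal B \<partial>M)"
  proof (rule nn_integral_mono_AE)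
    show "AE x in M. ennreal (\<bar>v x\<bar> powr q) \<le> ennreal A * ennreal (\<bar>v x\<bar> powr p x) + ennreal B"
      using ae
    proof eventually_elim
      case (elim x)
      have "\<bar>v x\<bar> powr q \<le> A * (\<bar>v x\<bar> powr p x) + B"
        unfolding A_def B_def mm_def by (rule pointwise) (use m q PP elim in auto)
      moreover have "ennreal A * ennreal (\<bar>v x\<bar> powr p x) + ennreal B = ennreal (A * (\<bar>v x\<bar> powr p x) + B)"
        using A0 B0 by (simp add: ennreal_mult ennreal_plus)
      ultimately show ?case by (simp add: ennreal_leI)
    qed
  qed
  also have "\<dots> = ennreal A * (\<integral>\<^sup>+ x. ennreal (\<bar>v x\<bar> powr p x) \<partial>M) + ennreal B * ennreal m"
    using meas by (simp add: nn_integral_add nn_integral_cmult sp)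
  also have "\<dots> \<le> ennreal A * 1 + ennreal B * ennreal m"
    using int1 by (intro add_mono mult_left_mono) auto
  also have "\<dots> = ennreal (A + B * m)" using A0 B0 m by (simp add: ennreal_mult ennreal_plus)
  also have "\<dots> \<le> ennreal ((max (m powr (1/q - 1/Pm)) (m powr (\<beta> * (1/q - 1/Pp))) * (1 + q/Pp*(\<beta>-1)) powr (1/q)) powr q)"
    unfolding A_def B_def mm_def by (intro ennreal_leI real_bound) (use m q PP b in auto)
  finally show ?thesis .
qed

lemma null_integral:
  assumes "emeasure M (space M) = 0"
  shows "(\<integral>\<^sup>+ x. f x \<partial>M) = 0"
proof -
  have "AE x in M. f x = 0"
    by (rule AE_I'[of "space M"]) (use assms in \<open>auto intro: null_setsI\<close>)
  then have "(\<integral>\<^sup>+ x. f x \<partial>M) = (\<integral>\<^sup>+ x. 0 \<partial>M)" by (rule nn_integral_cong_AE)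
  then show ?thesis by simp
qed

theorem lemma3p2:
  fixes \<Omega> :: "'a::euclidean_space set" and p :: "'a \<Rightarrow> real" and \<beta> :: real
  assumes "open \<Omega>"
    and "emeasure lebesgue \<Omega> < \<infinity>"
    and "p \<in> borel_measurable (lebesgue_on \<Omega>)"
    and "\<forall>x\<in>\<Omega>. 1 \<le> p x"
    and "p_plus \<Omega> p < \<infinity>"
    and "\<beta> > 1"
    and "p_plus \<Omega> p \<le> ereal \<beta> * p_minus \<Omega> p"
  shows "(\<forall>q (u :: 'a \<Rightarrow> real). 1 \<le> q \<and> ereal q \<le> p_minus \<Omega> p \<and> in_Lvar \<Omega> p u \<longrightarrow>
            in_Lq \<Omega> q u \<and>
            Lq_norm \<Omega> q u \<le>
              max (measure lebesgue \<Omega> powr (1 / q - 1 / real_of_ereal (p_minus \<Omega> p)))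
                  (measure lebesgue \<Omega> powr (\<beta> * (1 / q - 1 / real_of_ereal (p_plus \<Omega> p))))
              * (1 + q / real_of_ereal (p_plus \<Omega> p) * (\<beta> - 1)) powr (1 / q)
              * lux_norm \<Omega> p u)
       \<and> (\<forall>q (u :: 'a \<Rightarrow> 'b::euclidean_space).
            1 \<le> q \<and> ereal q \<le> p_minus \<Omega> p \<and>
            u \<in> borel_measurable (lebesgue_on \<Omega>) \<and> in_Lvar \<Omega> p (\<lambda>x. norm (u x)) \<longrightarrow>
            in_Lq \<Omega> q (\<lambda>x. norm (u x)))"
proof -
  note A = assms
  define M where "M = lebesgue_on \<Omega>"
  define m where "m = measure lebesgue \<Omega>"
  have \<Omega>meas: "\<Omega> \<in> sets lebesgue" using A(1) by simp
  have spM: "space M = \<Omega>" by (simp add: M_def)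
  have emM: "emeasure M (space M) = ennreal m"
  proof -
    have "emeasure M (space M) = emeasure lebesgue \<Omega>"
      unfolding spM unfolding M_def using \<Omega>meas by (intro emeasure_restrict_space) auto
    also have "\<dots> = ennreal m" unfolding m_def using A(2) by (intro emeasure_eq_ennreal_measure) auto
    finally show ?thesis .
  qed
  have m0: "m \<ge> 0" by (simp add: m_def)
  have part1: "in_Lq \<Omega> q u \<and>
            Lq_norm \<Omega> q u \<le>
              max (m powr (1 / q - 1 / real_of_ereal (p_minus \<Omega> p)))
                  (m powr (\<beta> * (1 / q - 1 / real_of_ereal (p_plus \<Omega> p))))
              * (1 + q / real_of_ereal (p_plus \<Omega> p) * (\<beta> - 1)) powr (1 / q)
              * lux_norm \<Omega> p u"
    if q1: "1 \<le> q" and qP: "ereal q \<le> p_minus \<Omega> p" and uL: "in_Lvar \<Omega> p u" for q and u :: "'a \<Rightarrow> real"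
  proof -
    have [measurable]: "u \<in> borel_measurable M" using uL by (simp add: in_Lvar_def M_def)
    have [measurable]: "p \<in> borel_measurable M" using A(3) by (simp add: M_def)
    have modM: "modular \<Omega> r f = (\<integral>\<^sup>+ x. ennreal (\<bar>f x\<bar> powr r x) \<partial>M)" for r f
      by (simp add: modular_def M_def)
    show ?thesis
    proof (cases "m = 0")
      case True
      have z: "modular \<Omega> (\<lambda>_. q) u = 0" unfolding modM
        by (rule null_integral) (simp add: emM True)
      show ?thesis using True z uL q1 by (simp add: in_Lq_def in_Lvar_def Lq_norm_def)
    next
      case False
      then have mpos: "m > 0" using m0 by simp
      have Mnz: "emeasure M (space M) \<noteq> 0" using emM mpos by simp
      have AE1: "AE x in M. ereal (p x) \<le> p_plus \<Omega> p"
        unfolding p_plus_def M_def[symmetric] by (rule esssup_AE)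
      have AE2: "AE x in M. p_minus \<Omega> p \<le> ereal (p x)"
      proof -
        have "AE x in M. - ereal (p x) \<le> esssup M (\<lambda>x. - ereal (p x))" by (rule esssup_AE)
        then show ?thesis
          by eventually_elim (simp add: p_minus_def essinf_def M_def[symmetric] ereal_uminus_le_reorder)
      qed
      have pm1: "1 \<le> p_minus \<Omega> p"
      proof -
        have "esssup M (\<lambda>x. - ereal (p x)) \<le> - 1"
        proof (rule esssup_I)
          show "(\<lambda>x. - ereal (p x)) \<in> borel_measurable M" by measurable
          show "AE x in M. - ereal (p x) \<le> - 1"
            using AE_space
          proof eventually_elim
            case (elim x)
            then have "1 \<le> p x" using A(4) spM by auto
            then show ?case by (simp add: one_ereal_def)
          qed
        qed
        then have "1 \<le> - esssup M (\<lambda>x. - ereal (p x))" by (metis ereal_minus_le_minus ereal_uminus_uminus)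
        then show ?thesis by (simp only: p_minus_def essinf_def M_def[symmetric])
      qed
      have pmpp: "p_minus \<Omega> p \<le> p_plus \<Omega> p"
      proof -
        have "AE x in M. p_minus \<Omega> p \<le> ereal (p x) \<and> ereal (p x) \<le> p_plus \<Omega> p" using AE1 AE2 by auto
        moreover have "ae_filter M \<noteq> bot" using Mnz by (simp add: ae_filter_eq_bot_iff)
        ultimately obtain x where "p_minus \<Omega> p \<le> ereal (p x) \<and> ereal (p x) \<le> p_plus \<Omega> p"
          using eventually_happens' by blast
        then show ?thesis by auto
      qed
      define PM where "PM = real_of_ereal (p_minus \<Omega> p)"
      define PP where "PP = real_of_ereal (p_plus \<Omega> p)"
      have ePM: "p_minus \<Omega> p = ereal PM" unfolding PM_def using pm1 pmpp A(5)
        by (intro ereal_real'[symmetric]) auto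
      have ePP: "p_plus \<Omega> p = ereal PP" unfolding PP_def using pm1 pmpp A(5)
        by (intro ereal_real'[symmetric]) auto
      have qPM: "q \<le> PM" using qP ePM by simp
      have PMPP: "PM \<le> PP" using pmpp ePM ePP by simp
      have PPb: "PP \<le> \<beta> * PM" using A(7) ePM ePP by simp
      have AEp: "AE x in M. PM \<le> p x \<and> p x \<le> PP" using AE1 AE2 by eventually_elim (simp add: ePM ePP)
      define C where "C = max (m powr (1 / q - 1 / PM)) (m powr (\<beta> * (1 / q - 1 / PP))) * (1 + q / PP * (\<beta> - 1)) powr (1 / q)"
      have Cpos: "C > 0"
      proof -
        have "1 + q / PP * (\<beta> - 1) > 0" using A(6) q1 qPM PMPP by (simp add: add_pos_nonneg)
        then show ?thesis using mpos by (simp add: C_def less_max_iff_disj)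
      qed
      define S where "S = {t::real. t > 0 \<and> modular \<Omega> p (\<lambda>x. u x / t) \<le> 1}"
      have lux: "lux_norm \<Omega> p u = Inf S" by (simp add: lux_norm_def S_def)
      have bnd: "modular \<Omega> (\<lambda>_. q) u \<le> ennreal ((t * C) powr q)" if tS: "t \<in> S" for t
      proof -
        have t0: "t > 0" and mod1: "modular \<Omega> p (\<lambda>x. u x / t) \<le> 1" using tS by (auto simp: S_def)
        have capp: "(\<integral>\<^sup>+ x. ennreal (\<bar>u x / t\<bar> powr q) \<partial>M) \<le> ennreal (C powr q)"
          unfolding C_def
        proof (rule core[where p=p])
          show "(\<lambda>x. ennreal (\<bar>u x / t\<bar> powr p x)) \<in> borel_measurable M" by measurable
          show "(\<integral>\<^sup>+ x. ennreal (\<bar>u x / t\<bar> powr p x) \<partial>M) \<le> 1" using mod1 by (simp add: modM)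
        qed (use emM mpos AEp q1 qPM PMPP PPb A(6) in auto)
        have pw: "ennreal (\<bar>u x\<bar> powr q) = ennreal (t powr q) * ennreal (\<bar>u x / t\<bar> powr q)" for x
        proof -
          have "\<bar>u x / t\<bar> powr q = \<bar>u x\<bar> powr q / t powr q" using t0 by (simp add: powr_divide)
          then have "\<bar>u x\<bar> powr q = t powr q * \<bar>u x / t\<bar> powr q" using t0 by simp
          then show ?thesis by (simp add: ennreal_mult)
        qed
        have "modular \<Omega> (\<lambda>_. q) u = ennreal (t powr q) * (\<integral>\<^sup>+ x. ennreal (\<bar>u x / t\<bar> powr q) \<partial>M)"
          unfolding modM pw by (rule nn_integral_cmult) measurable
        also have "\<dots> \<le> ennreal (t powr q) * ennreal (C powr q)" using capp by (rule mult_left_mono) simp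
        also have "\<dots> = ennreal ((t * C) powr q)" using t0 Cpos by (simp add: ennreal_mult powr_mult)
        finally show ?thesis .
      qed
      have Sne: "S \<noteq> {}"
      proof -
        define \<mu> where "\<mu> = enn2real (modular \<Omega> p u)"
        have mu: "modular \<Omega> p u = ennreal \<mu>" "\<mu> \<ge> 0"
          using uL by (auto simp: in_Lvar_def \<mu>_def)
        define t1 where "t1 = 1 + \<mu>"
        have t1: "t1 \<ge> 1" "t1 > 0" using mu by (auto simp: t1_def)
        have "modular \<Omega> p (\<lambda>x. u x / t1) \<le> (\<integral>\<^sup>+ x. ennreal (1/t1) * ennreal (\<bar>u x\<bar> powr p x) \<partial>M)"
          unfolding modM
        proof (rule nn_integral_mono)
          fix x assume "x \<in> space M"
          then have px: "1 \<le> p x" using A(4) spM by auto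
          have "t1 powr 1 \<le> t1 powr p x" using px t1 by (intro powr_mono) auto
          then have tt: "t1 \<le> t1 powr p x" using t1 by simp
          have "\<bar>u x / t1\<bar> powr p x = \<bar>u x\<bar> powr p x / t1 powr p x" using t1 by (simp add: powr_divide)
          also have "\<dots> \<le> \<bar>u x\<bar> powr p x / t1" using tt t1 by (intro divide_left_mono) auto
          finally show "ennreal (\<bar>u x / t1\<bar> powr p x) \<le> ennreal (1/t1) * ennreal (\<bar>u x\<bar> powr p x)"
            using t1 by (simp add: ennreal_mult[symmetric] ennreal_leI)
        qed
        also have "\<dots> = ennreal (1/t1) * modular \<Omega> p u"
          unfolding modM by (rule nn_integral_cmult) measurable
        also have "\<dots> = ennreal (\<mu> / t1)" using mu t1 by (simp add: ennreal_mult[symmetric])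
        also have "\<dots> \<le> 1" using mu t1 by (simp add: t1_def)
        finally have "t1 \<in> S" using t1 by (simp add: S_def)
        then show ?thesis by blast
      qed
      then obtain t0 where t0: "t0 \<in> S" by blast
      have fin: "modular \<Omega> (\<lambda>_. q) u < \<infinity>" using bnd[OF t0] by (simp add: le_less_trans)
      have Lqle: "Lq_norm \<Omega> q u \<le> t * C" if tS: "t \<in> S" for t
      proof -
        have t0: "t > 0" using tS by (simp add: S_def)
        have "enn2real (modular \<Omega> (\<lambda>_. q) u) \<le> (t * C) powr q"
          by (rule enn2real_leI) (use bnd[OF tS] in auto)
        then have "enn2real (modular \<Omega> (\<lambda>_. q) u) powr (1/q) \<le> ((t * C) powr q) powr (1/q)"
          using q1 by (intro powr_mono2) auto
        also have "\<dots> = t * C" using q1 t0 Cpos by (simp add: powr_powr)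
        finally show ?thesis by (simp add: Lq_norm_def)
      qed
      have "Lq_norm \<Omega> q u / C \<le> Inf S"
      proof (rule cInf_greatest[OF Sne])
        fix t assume "t \<in> S"
        then have "Lq_norm \<Omega> q u \<le> t * C" by (rule Lqle)
        then show "Lq_norm \<Omega> q u / C \<le> t" using Cpos by (simp add: divide_le_eq)
      qed
      then have "Lq_norm \<Omega> q u \<le> C * Inf S" using Cpos by (simp add: divide_le_eq mult.commute)
      then show ?thesis using fin uL
        by (simp add: in_Lq_def in_Lvar_def lux C_def PM_def PP_def)
    qed
  qed
  show ?thesis
  proof (rule conjI; intro allI impI)
    fix q and u :: "'a \<Rightarrow> real"
    assume "1 \<le> q \<and> ereal q \<le> p_minus \<Omega> p \<and> in_Lvar \<Omega> p u"
    then show "in_Lq \<Omega> q u \<and>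
            Lq_norm \<Omega> q u \<le>
              max (measure lebesgue \<Omega> powr (1 / q - 1 / real_of_ereal (p_minus \<Omega> p)))
                  (measure lebesgue \<Omega> powr (\<beta> * (1 / q - 1 / real_of_ereal (p_plus \<Omega> p))))
              * (1 + q / real_of_ereal (p_plus \<Omega> p) * (\<beta> - 1)) powr (1 / q)
              * lux_norm \<Omega> p u"
      using part1 by (simp add: m_def)
  next
    fix q and u :: "'a \<Rightarrow> 'b"
    assume "1 \<le> q \<and> ereal q \<le> p_minus \<Omega> p \<and> u \<in> borel_measurable (lebesgue_on \<Omega>) \<and> in_Lvar \<Omega> p (\<lambda>x. norm (u x))"
    then show "in_Lq \<Omega> q (\<lambda>x. norm (u x))" using part1 by blast
  qed
qed

end
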